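(* In the curved-exam game described in the context: (1) In any pure Nash equilibrium $x^*$, if $x_i^*=0$ then $x_j^*=0$ for every student $j$ with $\alpha_j<\alpha_i$; and if $x_i^*>0$ then $x_j^*>0$ for every student $j$ with $\alpha_j>\alpha_i$. (2) Let $0\le k\le n$ and let $x^{*(k)}$ be a $k$-don't care equilibrium. Then for each of the top $n-k$ students $i$, $$x_i^{*(k)}=\frac{(n-1)\alpha_i-n(1-\alpha_i)\big(m-\bar x^{*(k)}\big)}{n-\alpha_i},\qquad\text{where}\qquad \bar x^{*(k)}=\frac{(n-1)(m+1)S_2-(n-k)(m+1-1/n)}{(n-1)(S_2-1)+k},\quad S_2:=\sum_{i=k+1}^n\frac1{n-\alpha_{(i)}}.$$
   Context: The curved-exam game: fix $n\ge2$, abilities $\alpha_1,\dots,\alpha_n\in(0,1)$, target mean $m\in(0,1)$. Student $i$ chooses $x_i\in[0,1]$; $\bar x=\frac1n\sum_j x_j$, $\bar x_{-i}=\frac1{n-1}\sum_{j\ne i}x_j$. Grade $G_i(x)=x_i+\max(m-\bar x,0)$ (not truncated at 1); payoff $U_i(x)=G_i(x)^{\alpha_i}(1-x_i)^{1-\alpha_i}$. Let $\alpha_{(1)}\le\alpha_{(2)}\le\dots\le\alpha_{(n)}$ be the order statistics of the abilities (students relabelled accordingly). A $k$-don't care equilibrium $x^{*(k)}$ is a pure Nash equilibrium with an exam curve ($\bar x<m$) in which the $k$ students with the lowest abilities $\alpha_{(1)},\dots,\alpha_{(k)}$ exert zero effort and the top $n-k$ students (abilities $\alpha_{(k+1)},\dots,\alpha_{(n)}$)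 exert positive effort; $\bar x^{*(k)}$ denotes its mean effort. For $k=0$ this is a curved equilibrium with all efforts positive. *)

theory Defs
  imports Complex_Main
begin

definition xbar :: "nat \<Rightarrow> (nat \<Rightarrow> real) \<Rightarrow> real" where
  "xbar n x = (\<Sum>j<n. x j) / real n"

definition grade :: "nat \<Rightarrow> real \<Rightarrow> (nat \<Rightarrow> real) \<Rightarrow> nat \<Rightarrow> real" where
  "grade n m x i = x i + max (m - xbar n x) 0"

definition payoff :: "nat \<Rightarrow> (nat \<Rightarrow> real) \<Rightarrow> real \<Rightarrow> (nat \<Rightarrow> real) \<Rightarrow> nat \<Rightarrow> real" where
  "payoff n a m x i = grade n m x i powr a i * (1 - x i) powr (1 - a i)"

definition nash :: "nat \<Rightarrow> (nat \<Rightarrow> real) \<Rightarrow> real \<Rightarrow> (nat \<Rightarrow> real) \<Rightarrow> bool" where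
  "nash n a m x \<longleftrightarrow>
     (\<forall>i<n. 0 \<le> x i \<and> x i \<le> 1) \<and>
     (\<forall>i<n. \<forall>y. 0 \<le> y \<and> y \<le> 1 \<longrightarrow> payoff n a m (x(i := y)) i \<le> payoff n a m x i)"

text \<open>k-don't care equilibrium w.r.t. a relabelling sigma (sigma j = student with
  the (j+1)-th smallest ability): curved Nash equilibrium where the k lowest-ability
  students exert zero effort and the others positive effort.\<close>
definition k_dont_care :: "nat \<Rightarrow> (nat \<Rightarrow> real) \<Rightarrow> real \<Rightarrow> (nat \<Rightarrow> nat) \<Rightarrow> nat \<Rightarrow> (nat \<Rightarrow> real) \<Rightarrow> bool" where
  "k_dont_care n a m \<sigma> k x \<longleftrightarrow>
     nash n a m x \<and> xbar n x < m \<and>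
     (\<forall>j<k. x (\<sigma> j) = 0) \<and> (\<forall>j. k \<le> j \<and> j < n \<longrightarrow> x (\<sigma> j) > 0)"

end

theory Submission
  imports Defs
begin


lemma sum_upd:
  assumes "i < (n::nat)"
  shows "(\<Sum>j<n. (x(i:=y)) j) = (\<Sum>j<n. x j) - x i + (y::real)"
proof -
  have "(\<Sum>j<n. (x(i:=y)) j) = (x(i:=y)) i + (\<Sum>j\<in>{..<n}-{i}. (x(i:=y)) j)"
    by (rule sum.remove) (use assms in auto)
  also have "(\<Sum>j\<in>{..<n}-{i}. (x(i:=y)) j) = (\<Sum>j\<in>{..<n}-{i}. x j)"
    by (rule sum.cong) auto
  also have "(\<Sum>j<n. x j) = x i + (\<Sum>j\<in>{..<n}-{i}. x j)"
    using assms by (simp add: sum.remove)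
  hence "(\<Sum>j\<in>{..<n}-{i}. x j) = (\<Sum>j<n. x j) - x i" by simp
  finally show ?thesis by simp
qed

lemma payoff_upd:
  assumes "i < n"
  shows "payoff n a m (x(i:=y)) i =
    (y + max (m - ((\<Sum>j<n. x j) - x i + y) / real n) 0) powr a i * (1 - y) powr (1 - a i)"
  unfolding payoff_def grade_def xbar_def using sum_upd[OF assms] by simp

lemma nash_lt1:
  assumes N: "nash n a m x" and i: "i < n" and ai: "0 < a i" "a i < 1"
  shows "x i < 1"
proof (rule ccontr)
  assume "\<not> x i < 1"
  with N i have x1: "x i = 1" unfolding nash_def by force
  have "payoff n a m x i = 0" using x1 ai unfolding payoff_def by simp
  moreover have "payoff n a m (x(i:=1/2)) i > 0"
  proof -
    have "1/2 + max (m - ((\<Sum>j<n. x j) - x i + 1/2) / real n) 0 > 0"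
      using max.cobounded2[of 0 "m - ((\<Sum>j<n. x j) - x i + 1/2) / real n"] by linarith
    then show ?thesis unfolding payoff_upd[OF i] by simp
  qed
  moreover have "payoff n a m (x(i:=1/2)) i \<le> payoff n a m x i"
    using N i unfolding nash_def by auto
  ultimately show False by simp
qed

lemma nash_curve:
  assumes N: "nash n a m x" and i: "i < n" and ai: "0 < a i" "a i < 1" and x0: "x i = 0"
  shows "xbar n x < m"
proof (rule ccontr)
  assume "\<not> xbar n x < m"
  then have "payoff n a m x i = 0" using x0 ai unfolding payoff_def grade_def by simp
  moreover have "payoff n a m (x(i:=1/2)) i > 0"
  proof -
    have "1/2 + max (m - ((\<Sum>j<n. x j) - x i + 1/2) / real n) 0 > 0"
      using max.cobounded2[of 0 "m - ((\<Sum>j<n. x j) - x i + 1/2) / real n"] by linarith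
    then show ?thesis unfolding payoff_upd[OF i] by simp
  qed
  moreover have "payoff n a m (x(i:=1/2)) i \<le> payoff n a m x i"
    using N i unfolding nash_def by auto
  ultimately show False by simp
qed


lemma foc:
  assumes N: "nash n a m x" and i: "i < n" and ai: "0 < a i" "a i < 1"
    and cur: "xbar n x < m" and n2: "n \<ge> 2"
  shows "(0 < x i \<longrightarrow> a i * (real n - 1) * (1 - x i) = real n * (1 - a i) * (x i + (m - xbar n x)))
       \<and> (x i = 0 \<longrightarrow> a i * (real n - 1) \<le> real n * (1 - a i) * (m - xbar n x))"
proof -
  define c where "c = m - xbar n x"
  define S where "S = (\<Sum>j<n. x j)"
  define xi where "xi = x i"
  define b where "b = a i"
  have c0: "c > 0" using cur c_def by simp
  have nr: "real n \<ge> 2" using n2 by simp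
  have xbS: "xbar n x = S / real n" unfolding xbar_def S_def by simp
  have xi1: "xi < 1" using nash_lt1[OF N i ai] xi_def by simp
  have xi0: "xi \<ge> 0" using N i xi_def unfolding nash_def by auto
  define G where "G y = y + c + (xi - y) / real n" for y
  define h where "h y = b * ln (G y) + (1 - b) * ln (1 - y)" for y
  have Pgen: "payoff n a m (x(i:=y)) i = G y powr b * (1 - y) powr (1 - b)"
    if pos: "c + (xi - y) / real n > 0" for y
  proof -
    have eq: "m - (S - xi + y) / real n = c + (xi - y) / real n"
    proof -
      have "m - (S - xi + y) / real n = (m - S / real n) + (xi - y) / real n"
        by (simp add: diff_divide_distrib add_divide_distrib)
      then show ?thesis using xbS c_def by simp
    qed
    show ?thesis
      unfolding payoff_upd[OF i] S_def[symmetric] xi_def[symmetric] b_def[symmetric] eq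
      using pos by (simp add: G_def add.assoc)
  qed
  have key: "h y \<le> h xi" if y: "0 \<le> y" "y < 1" "\<bar>xi - y\<bar> < real n * c" for y
  proof -
    have pos: "c + (xi - y) / real n > 0"
    proof -
      have "(y - xi) / real n < c" using y nr by (simp add: field_simps abs_less_iff)
      moreover have "(xi - y) / real n = - ((y - xi) / real n)" by (simp add: minus_divide_left)
      ultimately show ?thesis by linarith
    qed
    have Gy: "G y > 0" using pos y unfolding G_def by simp
    have P: "payoff n a m (x(i:=y)) i = G y powr b * (1 - y) powr (1 - b)"
      using Pgen pos by simp
    have Px: "payoff n a m x i = G xi powr b * (1 - xi) powr (1 - b)"
      using Pgen[of xi] c0 xi_def by simp
    have le: "payoff n a m (x(i:=y)) i \<le> payoff n a m x i"
      using N i y unfolding nash_def by auto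
    have Gx: "G xi > 0" using c0 xi0 unfolding G_def by simp
    have p1: "G y powr b * (1 - y) powr (1 - b) > 0" using Gy y by simp
    have p2: "G xi powr b * (1 - xi) powr (1 - b) > 0" using Gx xi1 by simp
    have "ln (G y powr b * (1 - y) powr (1 - b)) \<le> ln (G xi powr b * (1 - xi) powr (1 - b))"
      using le P Px p1 p2 by simp
    moreover have "ln (G y powr b * (1 - y) powr (1 - b)) = h y"
      using Gy y by (simp add: h_def ln_mult ln_powr)
    moreover have "ln (G xi powr b * (1 - xi) powr (1 - b)) = h xi"
      using Gx xi1 by (simp add: h_def ln_mult ln_powr)
    ultimately show ?thesis by simp
  qed
  have GX: "G xi = xi + c" unfolding G_def by simp
  have D: "DERIV h xi :> b * (1 - 1 / real n) / (xi + c) - (1 - b) / (1 - xi)"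
  proof -
    have "DERIV G xi :> 1 - 1 / real n" unfolding G_def
      using nr by (auto intro!: derivative_eq_intros simp: field_simps)
    then have "DERIV (\<lambda>y. ln (G y)) xi :> (1 - 1 / real n) / G xi"
      using c0 xi0 GX by (auto intro!: derivative_eq_intros)
    then have d1: "DERIV (\<lambda>y. b * ln (G y)) xi :> b * ((1 - 1 / real n) / G xi)"
      by (rule DERIV_cmult)
    have "DERIV (\<lambda>y. ln (1 - y)) xi :> (- 1) / (1 - xi)"
      using xi1 by (auto intro!: derivative_eq_intros)
    then have d2: "DERIV (\<lambda>y. (1 - b) * ln (1 - y)) xi :> (1 - b) * ((- 1) / (1 - xi))"
      by (rule DERIV_cmult)
    have "DERIV h xi :> b * ((1 - 1 / real n) / G xi) + (1 - b) * ((- 1) / (1 - xi))"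
      unfolding h_def by (rule DERIV_add[OF d1 d2])
    then show ?thesis using GX by (simp add: algebra_simps)
  qed
  have A: "0 < xi \<longrightarrow> b * (real n - 1) * (1 - xi) = real n * (1 - b) * (xi + c)"
  proof
    assume xp: "0 < xi"
    define d where "d = min (real n * c) (min xi (1 - xi))"
    have d0: "d > 0" using xp xi1 c0 nr by (simp add: d_def)
    have "\<forall>y. \<bar>xi - y\<bar> < d \<longrightarrow> h y \<le> h xi"
      using key d_def by (auto simp: abs_less_iff)
    from DERIV_local_max[OF D d0 this]
    have "b * (1 - 1 / real n) / (xi + c) = (1 - b) / (1 - xi)" by simp
    moreover have "xi + c > 0" "1 - xi > 0" using xp c0 xi1 by auto
    ultimately have E: "b * (1 - 1 / real n) * (1 - xi) = (1 - b) * (xi + c)"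
      by (simp add: frac_eq_eq)
    have "real n * (1 - 1 / real n) = real n - 1" using nr by (simp add: field_simps)
    then have "b * (real n - 1) * (1 - xi) = real n * (b * (1 - 1 / real n) * (1 - xi))"
      by (metis mult.assoc mult.left_commute)
    also have "\<dots> = real n * (1 - b) * (xi + c)" using E by simp
    finally show "b * (real n - 1) * (1 - xi) = real n * (1 - b) * (xi + c)" .
  qed
  have B: "xi = 0 \<longrightarrow> b * (real n - 1) \<le> real n * (1 - b) * c"
  proof
    assume x0: "xi = 0"
    show "b * (real n - 1) \<le> real n * (1 - b) * c"
    proof (rule ccontr)
      assume "\<not> ?thesis"
      then have "b * (real n - 1) > real n * (1 - b) * c" by simp
      then have "b * (1 - 1 / real n) / (xi + c) - (1 - b) / (1 - xi) > 0"
        using x0 c0 nr by (simp add: field_simps)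
      from DERIV_pos_inc_right[OF D this] obtain d where d: "d > 0"
        "\<forall>t>0. t < d \<longrightarrow> h xi < h (xi + t)" by blast
      define t where "t = min d (min (real n * c) 1) / 2"
      have t0: "t > 0" using d c0 nr by (simp add: t_def)
      have nc: "real n * c > 0" using c0 nr by simp
      have "t < d" "t < real n * c" "t < 1" using d nc t0 unfolding t_def by linarith+
      then have "h (xi + t) \<le> h xi" using key[of "xi + t"] x0 t0 by simp
      moreover have "h xi < h (xi + t)" using d t0 \<open>t < d\<close> by blast
      ultimately show False by simp
    qed
  qed
  show ?thesis using A B unfolding c_def xi_def b_def by simp
qed


lemma part1:
  assumes N: "nash n a m x" and ha: "\<forall>i<n. 0 < a i \<and> a i < 1" and n2: "n \<ge> 2"
    and i: "i < n" and j: "j < n" and xi: "x i = 0" and aji: "a j < a i"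
  shows "x j = 0"
proof (rule ccontr)
  assume "x j \<noteq> 0"
  moreover have "x j \<ge> 0" using N j unfolding nash_def by auto
  ultimately have xj: "x j > 0" by simp
  have ai: "0 < a i" "a i < 1" and aj: "0 < a j" "a j < 1" using ha i j by auto
  have cur: "xbar n x < m" using nash_curve[OF N i ai xi] .
  define c where "c = m - xbar n x"
  have c0: "c > 0" using cur c_def by simp
  have Fi: "a i * (real n - 1) \<le> real n * (1 - a i) * c"
    using foc[OF N i ai cur n2] xi c_def by simp
  have Fj: "a j * (real n - 1) * (1 - x j) = real n * (1 - a j) * (x j + c)"
    using foc[OF N j aj cur n2] xj c_def by simp
  have nr: "real n - 1 > 0" using n2 by simp
  have "a j * (real n - 1) * (1 - x j) \<le> a j * (real n - 1)"
    using xj aj nr by (simp add: mult_left_le)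
  moreover have "real n * (1 - a j) * (x j + c) > real n * (1 - a j) * c"
    using xj aj n2 by simp
  ultimately have g1: "a j * (real n - 1) > real n * c * (1 - a j)" using Fj by (simp add: mult_ac)
  have g2: "a j * (real n - 1) * (1 - a i) > real n * c * (1 - a j) * (1 - a i)"
    using mult_strict_right_mono[OF g1, of "1 - a i"] ai by simp
  have g3: "a i * (real n - 1) * (1 - a j) \<le> real n * c * (1 - a i) * (1 - a j)"
    using mult_right_mono[OF Fi, of "1 - a j"] aj by (simp add: mult_ac)
  have "(real n - 1) * (a j - a i) > 0"
    using g2 g3 by (simp add: algebra_simps)
  then have "a j - a i > 0" using nr by (simp add: zero_less_mult_iff)
  with aji show False by simp
qed


lemma part2:
  assumes n2: "n \<ge> 2" and ha: "\<forall>i<n. 0 < a i \<and> a i < 1"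
    and bij: "bij_betw \<sigma> {..<n} {..<n}" and kn: "k \<le> n" and K: "k_dont_care n a m \<sigma> k x"
  shows "(let S2 = (\<Sum>j\<in>{k..<n}. 1 / (real n - a (\<sigma> j))) in
          xbar n x = ((real n - 1) * (m + 1) * S2 - real (n - k) * (m + 1 - 1 / real n))
                     / ((real n - 1) * (S2 - 1) + real k)) \<and>
        (\<forall>j. k \<le> j \<and> j < n \<longrightarrow>
          x (\<sigma> j) = ((real n - 1) * a (\<sigma> j) - real n * (1 - a (\<sigma> j)) * (m - xbar n x))
                      / (real n - a (\<sigma> j)))"
proof -
  have N: "nash n a m x" and cur: "xbar n x < m" and z: "\<forall>j<k. x (\<sigma> j) = 0"
    and p: "\<forall>j. k \<le> j \<and> j < n \<longrightarrow> x (\<sigma> j) > 0"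
    using K unfolding k_dont_care_def by auto
  define c where "c = m - xbar n x"
  have nr: "real n \<ge> 2" using n2 by simp
  have sig: "\<sigma> j < n" if "j < n" for j using bij that unfolding bij_betw_def by auto
  have X: "x (\<sigma> j) = ((real n - 1) * a (\<sigma> j) - real n * (1 - a (\<sigma> j)) * c) / (real n - a (\<sigma> j))"
    if j: "k \<le> j" "j < n" for j
  proof -
    have s: "\<sigma> j < n" using sig j by simp
    have aj: "0 < a (\<sigma> j)" "a (\<sigma> j) < 1" using ha s by auto
    have F: "a (\<sigma> j) * (real n - 1) * (1 - x (\<sigma> j)) = real n * (1 - a (\<sigma> j)) * (x (\<sigma> j) + c)"
      using foc[OF N s aj cur n2] p j c_def by simp
    have d: "real n - a (\<sigma> j) > 0" using aj nr by simp
    show ?thesis using F d by (simp add: field_simps)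
  qed
  define w where "w j = 1 / (real n - a (\<sigma> j))" for j
  define S2 where "S2 = (\<Sum>j\<in>{k..<n}. w j)"
  have X2: "x (\<sigma> j) = real n * (real n - 1) * (1 + c) * w j - (real n - 1) - real n * c"
    if j: "k \<le> j" "j < n" for j
  proof -
    have s: "\<sigma> j < n" using sig j by simp
    have aj: "0 < a (\<sigma> j)" "a (\<sigma> j) < 1" using ha s by auto
    have d: "real n - a (\<sigma> j) > 0" using aj nr by simp
    show ?thesis unfolding X[OF j] w_def using d by (simp add: field_simps)
  qed
  have sumx: "(\<Sum>i<n. x i) = (\<Sum>j\<in>{k..<n}. x (\<sigma> j))"
  proof -
    have "(\<Sum>i<n. x i) = (\<Sum>j<n. x (\<sigma> j))"
      using sum.reindex_bij_betw[OF bij, of x] by simp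
    also have "\<dots> = (\<Sum>j\<in>{0..<n}. x (\<sigma> j))" by (simp add: atLeast0LessThan)
    also have "\<dots> = (\<Sum>j\<in>{0..<k}. x (\<sigma> j)) + (\<Sum>j\<in>{k..<n}. x (\<sigma> j))"
      using kn by (simp add: sum.atLeastLessThan_concat)
    also have "(\<Sum>j\<in>{0..<k}. x (\<sigma> j)) = 0" using z by simp
    finally show ?thesis by simp
  qed
  have E: "real n * xbar n x = real n * (real n - 1) * (1 + c) * S2 - (real n - real k) * ((real n - 1) + real n * c)"
  proof -
    have "real n * xbar n x = (\<Sum>i<n. x i)" unfolding xbar_def using nr by simp
    also have "\<dots> = (\<Sum>j\<in>{k..<n}. real n * (real n - 1) * (1 + c) * w j - ((real n - 1) + real n * c))"
      unfolding sumx by (rule sum.cong) (auto simp: X2)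
    also have "\<dots> = real n * (real n - 1) * (1 + c) * S2 - (real n - real k) * ((real n - 1) + real n * c)"
      using kn by (simp add: sum_subtractf sum_distrib_left S2_def of_nat_diff)
    finally show ?thesis .
  qed
  define D where "D = (real n - 1) * (S2 - 1) + real k"
  have D0: "D > 0"
  proof (cases "k = n")
    case True
    then show ?thesis unfolding D_def S2_def by simp
  next
    case False
    then have kl: "k < n" using kn by simp
    have "(\<Sum>j\<in>{k..<n}. 1 / real n) < S2" unfolding S2_def
    proof (rule sum_strict_mono)
      show "{k..<n} \<noteq> {}" using kl by simp
      fix j assume "j \<in> {k..<n}"
      then have s: "\<sigma> j < n" using sig by auto
      have aj: "0 < a (\<sigma> j)" "a (\<sigma> j) < 1" using ha s by auto
      show "1 / real n < w j" unfolding w_def using aj nr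
        by (simp add: frac_less2)
    qed simp
    then have "(real n - real k) / real n < S2" using kn by (simp add: of_nat_diff)
    then have "real n - real k < S2 * real n" using nr by (simp add: field_simps)
    then have "(real n - 1) * (real n - real k) < (real n - 1) * (S2 * real n)"
      using nr by simp
    then have "real n * D > real n * (real k / real n)"
      unfolding D_def using nr by (simp add: algebra_simps)
    then have "D > real k / real n" using nr by (simp add: divide_less_eq mult.commute)
    then show ?thesis by (smt (verit) divide_nonneg_nonneg of_nat_0_le_iff)
  qed
  have "real n * (D * xbar n x) = real n * ((real n - 1) * (m + 1) * S2 - real (n - k) * (m + 1 - 1 / real n))"
  proof -
    have q: "real n * (m + 1 - 1 / real n) = real n * m + real n - 1" using nr by (simp add: field_simps)
    have "real n * ((real n - 1) * (m + 1) * S2 - real (n - k) * (m + 1 - 1 / real n))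
        = real n * (real n - 1) * (m + 1) * S2 - (real n - real k) * (real n * (m + 1 - 1 / real n))"
      using kn by (simp add: of_nat_diff algebra_simps)
    also have "\<dots> = real n * (real n - 1) * (m + 1) * S2 - (real n - real k) * (real n * m + real n - 1)"
      unfolding q ..
    finally have r: "real n * ((real n - 1) * (m + 1) * S2 - real (n - k) * (m + 1 - 1 / real n))
        = real n * (real n - 1) * (m + 1) * S2 - (real n - real k) * (real n * m + real n - 1)" .
    have "real n * (D * xbar n x) - (real n * (real n - 1) * (m + 1) * S2 - (real n - real k) * (real n * m + real n - 1))
       = real n * xbar n x - (real n * (real n - 1) * (1 + c) * S2 - (real n - real k) * ((real n - 1) + real n * c))"
      unfolding D_def c_def by (simp add: algebra_simps)
    then show ?thesis using E r by simp
  qed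
  then have "D * xbar n x = (real n - 1) * (m + 1) * S2 - real (n - k) * (m + 1 - 1 / real n)"
    using nr by simp
  then have XB: "xbar n x = ((real n - 1) * (m + 1) * S2 - real (n - k) * (m + 1 - 1 / real n)) / D"
    using D0 by (simp add: eq_divide_eq mult.commute)
  show ?thesis
    unfolding Let_def using XB X unfolding D_def S2_def w_def c_def by simp
qed


theorem mainTheorem13:
  fixes n :: nat and a :: "nat \<Rightarrow> real" and m :: real
  assumes hn: "n \<ge> 2"
    and ha: "\<forall>i<n. 0 < a i \<and> a i < 1"
    and hm: "0 < m" "m < 1"
  shows
    "(\<forall>x. nash n a m x \<longrightarrow>
        (\<forall>i<n. \<forall>j<n. x i = 0 \<and> a j < a i \<longrightarrow> x j = 0) \<and>
        (\<forall>i<n. \<forall>j<n. x i > 0 \<and> a j > a i \<longrightarrow> x j > 0))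
     \<and>
     (\<forall>\<sigma> k x. bij_betw \<sigma> {..<n} {..<n} \<and>
        (\<forall>p q. p \<le> q \<and> q < n \<longrightarrow> a (\<sigma> p) \<le> a (\<sigma> q)) \<and>
        k \<le> n \<and> k_dont_care n a m \<sigma> k x \<longrightarrow>
        (let S2 = (\<Sum>j\<in>{k..<n}. 1 / (real n - a (\<sigma> j))) in
          xbar n x = ((real n - 1) * (m + 1) * S2 - real (n - k) * (m + 1 - 1 / real n))
                     / ((real n - 1) * (S2 - 1) + real k)) \<and>
        (\<forall>j. k \<le> j \<and> j < n \<longrightarrow>
          x (\<sigma> j) = ((real n - 1) * a (\<sigma> j) - real n * (1 - a (\<sigma> j)) * (m - xbar n x))
                      / (real n - a (\<sigma> j))))"
  proof (rule conjI; (rule allI impI)+)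
  fix x assume N: "nash n a m x"
  show "(\<forall>i<n. \<forall>j<n. x i = 0 \<and> a j < a i \<longrightarrow> x j = 0) \<and>
        (\<forall>i<n. \<forall>j<n. x i > 0 \<and> a j > a i \<longrightarrow> x j > 0)"
  proof (rule conjI)
  show "\<forall>i<n. \<forall>j<n. x i = 0 \<and> a j < a i \<longrightarrow> x j = 0"
    using part1[OF N ha hn] by blast
  show "\<forall>i<n. \<forall>j<n. x i > 0 \<and> a j > a i \<longrightarrow> x j > 0"
  proof (intro allI impI)
    fix i j assume i: "i < n" and j: "j < n" and h: "x i > 0 \<and> a j > a i"
    have "x j \<ge> 0" using N j unfolding nash_def by auto
    moreover have "x j \<noteq> 0"
    proof
      assume "x j = 0"
      then have "x i = 0" using part1[OF N ha hn j i] h by simp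
      with h show False by simp
    qed
    ultimately show "x j > 0" by simp
  qed
  qed
next
  fix \<sigma> k x
  assume H: "bij_betw \<sigma> {..<n} {..<n} \<and>
        (\<forall>p q. p \<le> q \<and> q < n \<longrightarrow> a (\<sigma> p) \<le> a (\<sigma> q)) \<and>
        k \<le> n \<and> k_dont_care n a m \<sigma> k x"
  then have bij: "bij_betw \<sigma> {..<n} {..<n}" and kn: "k \<le> n" and K: "k_dont_care n a m \<sigma> k x"
    by auto
  note P = part2[OF hn ha bij kn K]
  show "(let S2 = (\<Sum>j\<in>{k..<n}. 1 / (real n - a (\<sigma> j))) in
          xbar n x = ((real n - 1) * (m + 1) * S2 - real (n - k) * (m + 1 - 1 / real n))
                     / ((real n - 1) * (S2 - 1) + real k)) \<and>
        (\<forall>j. k \<le> j \<and> j < n \<longrightarrow>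
          x (\<sigma> j) = ((real n - 1) * a (\<sigma> j) - real n * (1 - a (\<sigma> j)) * (m - xbar n x))
                      / (real n - a (\<sigma> j)))" using P by blast
qed

end
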